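(* Let $p_1\in \mathbb{P}^2$ and let $p_2$ be a point which is either in the first neighbourhood of $p_1$ or a distinct point of $\mathbb{P}^2$. Then there exist a morphism $\nu\colon\mathbb{A}^1\to \mathrm{Bir}(\mathbb{P}^2)$ and a morphism $p_3\colon \mathbb{A}^1\to \mathbb{P}^2$ such that: $(1)$ for $t\not=0$, $\nu(t)$ is a quadratic map with base-points $p_1,p_2,p_3(t)$; $(2)$ the map $\nu(0)$ is the identity and $p_3(0)$ is collinear with $p_1$ and $p_2$.
   Context: Work over an algebraically closed field of characteristic $0$. $\mathrm{Bir}(\mathbb{P}^2)$ is the group of birational transformations of $\mathbb{P}^2$. A morphism $A\to\mathrm{Bir}(\mathbb{P}^2)$ from an irreducible variety $A$ is a family in the sense of Demazure: an $A$-birational map $f$ of $A\times\mathbb{P}^2$, $(a,x)\dashrightarrow(a,p_2(f(a,x)))$, inducing an isomorphism between open subsets surjecting onto $A$, with $a\mapsto f_a$. A quadratic map is a birational map of degree $2$. *)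

theory Defs
  imports "HOL-Computational_Algebra.Polynomial"
begin

type_synonym 'k pt = "'k \<times> 'k \<times> 'k"

definition c0 :: "'k pt \<Rightarrow> 'k" where "c0 v = fst v"
definition c1 :: "'k pt \<Rightarrow> 'k" where "c1 v = fst (snd v)"
definition c2 :: "'k pt \<Rightarrow> 'k" where "c2 v = snd (snd v)"

definition nz :: "'k::zero pt \<Rightarrow> bool" where "nz v \<longleftrightarrow> v \<noteq> (0,0,0)"

definition smult3 :: "'k::times \<Rightarrow> 'k pt \<Rightarrow> 'k pt" where
  "smult3 c v = (c * c0 v, c * c1 v, c * c2 v)"

definition add3 :: "'k::plus pt \<Rightarrow> 'k pt \<Rightarrow> 'k pt" where
  "add3 v w = (c0 v + c0 w, c1 v + c1 w, c2 v + c2 w)"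

definition proj_eq :: "'k::field pt \<Rightarrow> 'k pt \<Rightarrow> bool" where
  "proj_eq v w \<longleftrightarrow> nz v \<and> (\<exists>c. c \<noteq> 0 \<and> w = smult3 c v)"

definition par3 :: "'k::comm_ring pt \<Rightarrow> 'k pt \<Rightarrow> bool" where
  "par3 a b \<longleftrightarrow> c0 a * c1 b = c1 a * c0 b \<and> c0 a * c2 b = c2 a * c0 b \<and> c1 a * c2 b = c2 a * c1 b"

definition det3 :: "'k::comm_ring pt \<Rightarrow> 'k pt \<Rightarrow> 'k pt \<Rightarrow> 'k" where
  "det3 a b c = c0 a * (c1 b * c2 c - c2 b * c1 c) - c1 a * (c0 b * c2 c - c2 b * c0 c)
              + c2 a * (c0 b * c1 c - c1 b * c0 c)"

definition alg_closed :: "'k::field itself \<Rightarrow> bool" where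
  "alg_closed _ \<longleftrightarrow> (\<forall>p :: 'k poly. degree p > 0 \<longrightarrow> (\<exists>x. poly p x = 0))"

definition hompoly :: "nat \<Rightarrow> ('k::comm_ring_1 pt \<Rightarrow> 'k) \<Rightarrow> bool" where
  "hompoly d P \<longleftrightarrow> (\<exists>C :: nat \<Rightarrow> nat \<Rightarrow> 'k. \<forall>x y z.
      P (x,y,z) = (\<Sum>i\<le>d. \<Sum>j\<le>d-i. C i j * x^i * y^j * z^(d-i-j)))"

definition hommap :: "nat \<Rightarrow> ('k::comm_ring_1 pt \<Rightarrow> 'k pt) \<Rightarrow> bool" where
  "hommap d H \<longleftrightarrow> hompoly d (\<lambda>v. c0 (H v)) \<and> hompoly d (\<lambda>v. c1 (H v)) \<and> hompoly d (\<lambda>v. c2 (H v))"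

definition fampoly :: "nat \<Rightarrow> ('k::comm_ring_1 \<Rightarrow> 'k pt \<Rightarrow> 'k) \<Rightarrow> bool" where
  "fampoly d P \<longleftrightarrow> (\<exists>(N::nat) (C :: nat \<Rightarrow> nat \<Rightarrow> nat \<Rightarrow> 'k). \<forall>t x y z.
      P t (x,y,z) = (\<Sum>a\<le>N. \<Sum>i\<le>d. \<Sum>j\<le>d-i. C a i j * t^a * x^i * y^j * z^(d-i-j)))"

definition fammap :: "nat \<Rightarrow> ('k::comm_ring_1 \<Rightarrow> 'k pt \<Rightarrow> 'k pt) \<Rightarrow> bool" where
  "fammap d F \<longleftrightarrow> fampoly d (\<lambda>t v. c0 (F t v)) \<and> fampoly d (\<lambda>t v. c1 (F t v))
                  \<and> fampoly d (\<lambda>t v. c2 (F t v))"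

text \<open>Zariski open subsets of P^2 (as saturated sets of nonzero representatives).\<close>
definition zopen2 :: "'k::comm_ring_1 pt set \<Rightarrow> bool" where
  "zopen2 W \<longleftrightarrow> (\<exists>S. (\<forall>P\<in>S. \<exists>d. hompoly d P) \<and> W = {x. nz x \<and> (\<exists>P\<in>S. P x \<noteq> 0)})"

definition zopen_fam :: "('k::comm_ring_1 \<times> 'k pt) set \<Rightarrow> bool" where
  "zopen_fam U \<longleftrightarrow> (\<exists>S. (\<forall>P\<in>S. \<exists>d. fampoly d P)
       \<and> U = {(t,x). nz x \<and> (\<exists>P\<in>S. P t x \<noteq> 0)})"

text \<open>Two representatives define the same rational map.\<close>
definition fam_equiv :: "('k::comm_ring_1 \<Rightarrow> 'k pt \<Rightarrow> 'k pt) \<Rightarrow> ('k \<Rightarrow> 'k pt \<Rightarrow> 'k pt) \<Rightarrow> bool" where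
  "fam_equiv F G \<longleftrightarrow> (\<forall>t v. par3 (F t v) (G t v))"

definition fam_nontriv :: "('k::zero \<Rightarrow> 'k pt \<Rightarrow> 'k pt) \<Rightarrow> bool" where
  "fam_nontriv F \<longleftrightarrow> (\<exists>t v. nz (F t v))"

text \<open>The rational map (t,x) |-> (t, F(t,x)) is defined at (t,x) with value w.\<close>
definition rat_val :: "('k::field \<Rightarrow> 'k pt \<Rightarrow> 'k pt) \<Rightarrow> 'k \<Rightarrow> 'k pt \<Rightarrow> 'k pt \<Rightarrow> bool" where
  "rat_val F t x w \<longleftrightarrow> nz x \<and> (\<exists>d F'. fammap d F' \<and> fam_nontriv F' \<and> fam_equiv F F'
        \<and> proj_eq (F' t x) w)"

text \<open>Morphism A^1 -> Bir(P^2) in the sense of Demazure, given by an A^1-birational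
  map f of A^1 x P^2 (represented by F, with inverse G) inducing an isomorphism
  between open subsets U, V that both surject onto A^1.\<close>
definition demazure_family :: "('k::field \<Rightarrow> 'k pt \<Rightarrow> 'k pt) \<Rightarrow> bool" where
  "demazure_family F \<longleftrightarrow> (\<exists>d e G U V. fammap d F \<and> fam_nontriv F \<and> fammap e G \<and> fam_nontriv G
     \<and> zopen_fam U \<and> zopen_fam V \<and> fst ` U = UNIV \<and> fst ` V = UNIV
     \<and> (\<forall>t x. (t,x) \<in> U \<longrightarrow> (\<exists>w. rat_val F t x w \<and> (t,w) \<in> V \<and> rat_val G t w x))
     \<and> (\<forall>t w. (t,w) \<in> V \<longrightarrow> (\<exists>x. rat_val G t w x \<and> (t,x) \<in> U \<and> rat_val F t x w)))"

text \<open>H (a triple of homogeneous polynomials) represents the birational map f_t of P^2,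
  i.e. agrees with the fibre of f over t on a nonempty Zariski open set.\<close>
definition fiber_rep :: "('k::field \<Rightarrow> 'k pt \<Rightarrow> 'k pt) \<Rightarrow> 'k \<Rightarrow> ('k pt \<Rightarrow> 'k pt) \<Rightarrow> bool" where
  "fiber_rep F t H \<longleftrightarrow> (\<exists>m W. hommap m H \<and> (\<exists>v. nz (H v)) \<and> zopen2 W \<and> W \<noteq> {}
      \<and> (\<forall>x\<in>W. nz (H x) \<and> rat_val F t x (H x)))"

text \<open>Second point: either a proper point of P^2 or a point in the first neighbourhood
  of p1, i.e. a tangent direction at p1, given by a vector v (the line through p1 and [v]).\<close>
datatype 'k second_pt = Proper "'k pt" | Infnear "'k pt"

definition valid_second :: "'k::field pt \<Rightarrow> 'k second_pt \<Rightarrow> bool" where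
  "valid_second p1 q = (case q of Proper w \<Rightarrow> nz w \<and> \<not> par3 p1 w
                                | Infnear v \<Rightarrow> nz v \<and> \<not> par3 p1 v)"

definition second_vec :: "'k second_pt \<Rightarrow> 'k pt" where
  "second_vec q = (case q of Proper w \<Rightarrow> w | Infnear v \<Rightarrow> v)"

definition second_cond :: "'k::comm_ring_1 pt \<Rightarrow> 'k second_pt \<Rightarrow> ('k pt \<Rightarrow> 'k) \<Rightarrow> bool" where
  "second_cond p1 q Q = (case q of Proper w \<Rightarrow> Q w = 0
                                 | Infnear v \<Rightarrow> Q (add3 p1 v) - Q p1 - Q v = 0)"

definition birational_map :: "('k::field pt \<Rightarrow> 'k pt) \<Rightarrow> bool" where
  "birational_map H \<longleftrightarrow> (\<exists>m e K W W'. hommap m H \<and> hommap e K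
      \<and> zopen2 W \<and> W \<noteq> {} \<and> (\<forall>x\<in>W. nz (H x) \<and> nz (K (H x)) \<and> proj_eq x (K (H x)))
      \<and> zopen2 W' \<and> W' \<noteq> {} \<and> (\<forall>x\<in>W'. nz (K x) \<and> nz (H (K x)) \<and> proj_eq x (H (K x))))"

definition no_common_factor :: "nat \<Rightarrow> ('k::comm_ring_1 pt \<Rightarrow> 'k pt) \<Rightarrow> bool" where
  "no_common_factor d H \<longleftrightarrow> \<not> (\<exists>c L M. 0 < c \<and> c \<le> d \<and> hompoly c L \<and> (\<exists>v. L v \<noteq> 0)
       \<and> hommap (d - c) M \<and> (\<forall>v. H v = smult3 (L v) (M v)))"

text \<open>H is a quadratic map (birational of degree 2) whose base points are p1, p2, p3:
  its homaloidal net equals the net of conics through p1, p2, p3.\<close>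
definition quad_map_bp :: "('k::field pt \<Rightarrow> 'k pt) \<Rightarrow> 'k pt \<Rightarrow> 'k second_pt \<Rightarrow> 'k pt \<Rightarrow> bool" where
  "quad_map_bp H p1 p2 p3 \<longleftrightarrow> hommap 2 H \<and> no_common_factor 2 H \<and> birational_map H
     \<and> {(\<lambda>v. a * c0 (H v) + b * c1 (H v) + c * c2 (H v)) | a b c. True}
       = {Q. hompoly 2 Q \<and> Q p1 = 0 \<and> second_cond p1 p2 Q \<and> Q p3 = 0}"

definition morph_A1_P2 :: "('k::comm_ring_1 \<Rightarrow> 'k pt) \<Rightarrow> bool" where
  "morph_A1_P2 p \<longleftrightarrow> (\<exists>u0 u1 u2. \<forall>t. p t = (poly u0 t, poly u1 t, poly u2 t) \<and> nz (p t))"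

end

theory Submission
  imports Defs
begin

lemma fampoly_alt:
  "fampoly d P \<longleftrightarrow> (\<exists>(N::nat) C. \<forall>t v. P t v =
     (\<Sum>a\<le>N. \<Sum>i\<le>d. \<Sum>j\<le>d-i. C a i j * t^a * c0 v^i * c1 v^j * c2 v^(d-i-j)))"
  unfolding fampoly_def c0_def c1_def c2_def by auto

lemma fampoly_zero: "fampoly d (\<lambda>t v. 0)"
  unfolding fampoly_alt by (rule exI[of _ 0], rule exI[of _ "\<lambda>_ _ _. 0"]) simp

lemma fampoly_cmult: "fampoly d P \<Longrightarrow> fampoly d (\<lambda>t v. c * P t v)"
  unfolding fampoly_alt
  apply (elim exE)
  subgoal for N C
    by (rule exI[of _ N], rule exI[of _ "\<lambda>a i j. c * C a i j"]) (simp add: sum_distrib_left mult.assoc)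
  done

lemma fampoly_pad:
  assumes "fampoly d P"
  shows "\<exists>N C. (\<forall>M\<ge>N. \<forall>t v. P t v =
     (\<Sum>a\<le>M. \<Sum>i\<le>d. \<Sum>j\<le>d-i. C a i j * t^a * c0 v^i * c1 v^j * c2 v^(d-i-j)))"
proof -
  from assms obtain N C where h: "\<forall>t v. P t v =
     (\<Sum>a\<le>N. \<Sum>i\<le>d. \<Sum>j\<le>d-i. C a i j * t^a * c0 v^i * c1 v^j * c2 v^(d-i-j))"
    unfolding fampoly_alt by blast
  define C' where "C' a i j = (if a \<le> N then C a i j else 0)" for a i j
  show ?thesis
  proof (intro exI allI impI)
    fix M t v assume "N \<le> M"
    have "(\<Sum>a\<le>M. \<Sum>i\<le>d. \<Sum>j\<le>d-i. C' a i j * t^a * c0 v^i * c1 v^j * c2 v^(d-i-j))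
        = (\<Sum>a\<le>N. \<Sum>i\<le>d. \<Sum>j\<le>d-i. C' a i j * t^a * c0 v^i * c1 v^j * c2 v^(d-i-j))"
      by (rule sum.mono_neutral_right) (use \<open>N \<le> M\<close> in \<open>auto simp: C'_def\<close>)
    also have "\<dots> = P t v" using h[rule_format, of t v] by (simp add: C'_def)
    finally show "P t v = (\<Sum>a\<le>M. \<Sum>i\<le>d. \<Sum>j\<le>d-i. C' a i j * t^a * c0 v^i * c1 v^j * c2 v^(d-i-j))" by simp
  qed
qed

lemma fampoly_add: "fampoly d P \<Longrightarrow> fampoly d Q \<Longrightarrow> fampoly d (\<lambda>t v. P t v + Q t v)"
proof -
  assume "fampoly d P" "fampoly d Q"
  then obtain N1 C1 N2 C2 where
   h1: "\<forall>M\<ge>N1. \<forall>t v. P t v = (\<Sum>a\<le>M. \<Sum>i\<le>d. \<Sum>j\<le>d-i. C1 a i j * t^a * c0 v^i * c1 v^j * c2 v^(d-i-j))" and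
   h2: "\<forall>M\<ge>N2. \<forall>t v. Q t v = (\<Sum>a\<le>M. \<Sum>i\<le>d. \<Sum>j\<le>d-i. C2 a i j * t^a * c0 v^i * c1 v^j * c2 v^(d-i-j))"
    using fampoly_pad[of d P] fampoly_pad[of d Q] by blast
  show ?thesis unfolding fampoly_alt
    apply (rule exI[of _ "N1+N2"], rule exI[of _ "\<lambda>a i j. C1 a i j + C2 a i j"])
    apply (intro allI)
    subgoal for t v
    using h1[rule_format, of "N1+N2" t v] h2[rule_format, of "N1+N2" t v]
    by (simp add: distrib_right sum.distrib)
    done
qed

lemma fampoly_sum: "finite A \<Longrightarrow> (\<And>k. k \<in> A \<Longrightarrow> fampoly d (f k)) \<Longrightarrow> fampoly d (\<lambda>t v. \<Sum>k\<in>A. f k t v)"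
  by (induction A rule: finite_induct) (auto intro: fampoly_zero fampoly_add)

lemma sum_if_const: "(\<Sum>x\<in>A. if P then f x else 0) = (if P then sum f A else 0)"
  by auto

lemma fampoly_mono:
  assumes "i + j + k = d"
  shows "fampoly d (\<lambda>t v. c * t^a * c0 v^i * c1 v^j * c2 v^k)"
  unfolding fampoly_alt
proof (rule exI[of _ a], rule exI[of _ "\<lambda>a' i' j'. if a' = a \<and> i' = i \<and> j' = j then c else 0"], intro allI)
  fix t v
  define X where "X a' i' j' = c * t^a' * c0 v^i' * c1 v^j' * c2 v^(d-i'-j')" for a' i' j'
  have e: "(if a' = a \<and> i' = i \<and> j' = j then c else 0) * t^a' * c0 v^i' * c1 v^j' * c2 v^(d-i'-j')
     = (if a' = a then (if i' = i then (if j' = j then X a' i' j' else 0) else 0) else 0)" for a' i' j'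
    by (simp add: X_def)
  have "(\<Sum>a'\<le>a. \<Sum>i'\<le>d. \<Sum>j'\<le>d-i'. (if a' = a \<and> i' = i \<and> j' = j then c else 0) * t^a' * c0 v^i' * c1 v^j' * c2 v^(d-i'-j'))
     = (\<Sum>a'\<le>a. \<Sum>i'\<le>d. \<Sum>j'\<le>d-i'. (if a' = a then (if i' = i then (if j' = j then X a' i' j' else 0) else 0) else 0))"
    by (simp only: e)
  also have "\<dots> = (\<Sum>a'\<le>a. if a' = a then (\<Sum>i'\<le>d. if i' = i then (\<Sum>j'\<le>d-i'. if j' = j then X a' i' j' else 0) else 0) else 0)"
    by (simp only: sum_if_const)
  also have "\<dots> = X a i j"
    using assms by (simp add: sum.delta)
  also have "\<dots> = c * t^a * c0 v^i * c1 v^j * c2 v^k"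
  proof -
    have "d - i - j = k" using assms by simp
    then show ?thesis by (simp add: X_def)
  qed
  finally show "c * t ^ a * c0 v ^ i * c1 v ^ j * c2 v ^ k = (\<Sum>a'\<le>a. \<Sum>i'\<le>d. \<Sum>j'\<le>d-i'. (if a' = a \<and> i' = i \<and> j' = j then c else 0) * t^a' * c0 v^i' * c1 v^j' * c2 v^(d-i'-j'))" by simp
qed

lemma fampoly_cong: "fampoly d P \<Longrightarrow> (\<And>t v. P t v = Q t v) \<Longrightarrow> fampoly d Q"
proof -
  assume "fampoly d P" "\<And>t v. P t v = Q t v"
  then have "P = Q" by (intro ext)
  then show ?thesis using \<open>fampoly d P\<close> by simp
qed

lemma fampoly_mono_mult:
  assumes "fampoly e Q" "i + j + k = d"
  shows "fampoly (d + e) (\<lambda>t v. (c * t^a * c0 v^i * c1 v^j * c2 v^k) * Q t v)"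
proof -
  from assms(1) obtain N C where h: "\<forall>t v. Q t v =
     (\<Sum>b\<le>N. \<Sum>i\<le>e. \<Sum>j\<le>e-i. C b i j * t^b * c0 v^i * c1 v^j * c2 v^(e-i-j))"
    unfolding fampoly_alt by blast
  have "fampoly (d+e) (\<lambda>t v. \<Sum>b\<le>N. \<Sum>i'\<le>e. \<Sum>j'\<le>e-i'.
      (c * C b i' j') * t^(a+b) * c0 v^(i+i') * c1 v^(j+j') * c2 v^(k + (e-i'-j')))"
    by (intro fampoly_sum finite_atMost fampoly_mono) (use assms(2) in auto)
  then show ?thesis
  proof (rule fampoly_cong)
    fix t v
    show "(\<Sum>b\<le>N. \<Sum>i'\<le>e. \<Sum>j'\<le>e-i'.
      (c * C b i' j') * t^(a+b) * c0 v^(i+i') * c1 v^(j+j') * c2 v^(k + (e-i'-j'))) =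
      (c * t^a * c0 v^i * c1 v^j * c2 v^k) * Q t v"
      unfolding h[rule_format, of t v]
      by (simp only: sum_distrib_left power_add mult_ac)
  qed
qed

lemma fampoly_mult:
  assumes "fampoly d P" "fampoly e Q"
  shows "fampoly (d + e) (\<lambda>t v. P t v * Q t v)"
proof -
  from assms(1) obtain N C where h: "\<forall>t v. P t v =
     (\<Sum>a\<le>N. \<Sum>i\<le>d. \<Sum>j\<le>d-i. C a i j * t^a * c0 v^i * c1 v^j * c2 v^(d-i-j))"
    unfolding fampoly_alt by blast
  have "fampoly (d+e) (\<lambda>t v. \<Sum>a\<le>N. \<Sum>i\<le>d. \<Sum>j\<le>d-i.
      (C a i j * t^a * c0 v^i * c1 v^j * c2 v^(d-i-j)) * Q t v)"
    by (intro fampoly_sum finite_atMost fampoly_mono_mult assms(2)) auto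
  then show ?thesis
    by (rule fampoly_cong) (simp add: h[rule_format] sum_distrib_right)
qed

lemma fampoly_power: "fampoly d P \<Longrightarrow> fampoly (n * d) (\<lambda>t v. P t v ^ n)"
proof (induction n)
  case 0
  then show ?case using fampoly_mono[of 0 0 0 0 1 0] by simp
next
  case (Suc n)
  then have "fampoly (d + n * d) (\<lambda>t v. P t v * P t v ^ n)" by (intro fampoly_mult)
  then show ?case by simp
qed

lemma fampoly_const: "fampoly 0 (\<lambda>t v. c)"
  using fampoly_mono[of 0 0 0 0 c 0] by simp

lemma fampoly_t: "fampoly 0 (\<lambda>t v. t)"
  using fampoly_mono[of 0 0 0 0 1 1] by simp

lemma fampoly_x: "fampoly 1 (\<lambda>t v. c0 v)"
  using fampoly_mono[of 1 0 0 1 1 0] by simp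
lemma fampoly_y: "fampoly 1 (\<lambda>t v. c1 v)"
  using fampoly_mono[of 0 1 0 1 1 0] by simp
lemma fampoly_z: "fampoly 1 (\<lambda>t v. c2 v)"
  using fampoly_mono[of 0 0 1 1 1 0] by simp

lemma fampoly_mult':
  "fampoly d P \<Longrightarrow> fampoly e Q \<Longrightarrow> n = d + e \<Longrightarrow> fampoly n (\<lambda>t v. P t v * Q t v)"
  using fampoly_mult by blast

lemma fampoly_power': "fampoly d P \<Longrightarrow> m = n * d \<Longrightarrow> fampoly m (\<lambda>t v. P t v ^ n)"
  using fampoly_power by blast

lemma fampoly_uminus: "fampoly d P \<Longrightarrow> fampoly d (\<lambda>t v. - P t v)"
  using fampoly_cmult[of d P "-1"] by simp

lemma fampoly_diff: "fampoly d P \<Longrightarrow> fampoly d Q \<Longrightarrow> fampoly d (\<lambda>t v. P t v - Q t v)"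
  using fampoly_add[of d P "\<lambda>t v. - Q t v"] fampoly_uminus[of d Q] by simp

lemmas fampoly_intros = fampoly_add fampoly_diff fampoly_uminus fampoly_mult' fampoly_power'
  fampoly_const fampoly_t fampoly_x fampoly_y fampoly_z fampoly_zero

lemma "fampoly 2 (\<lambda>t v. c0 v * c2 v - t * c0 v * c1 v)"
  by (rule fampoly_intros | simp)+

lemma c012_simps[simp]: "c0 (x,y,z) = x" "c1 (x,y,z) = y" "c2 (x,y,z) = z"
  by (simp_all add: c0_def c1_def c2_def)

lemma fampoly_subst:
  assumes "fampoly d P" "fampoly 1 L0" "fampoly 1 L1" "fampoly 1 L2"
  shows "fampoly d (\<lambda>t v. P t (L0 t v, L1 t v, L2 t v))"
proof -
  from assms(1) obtain N C where h: "\<forall>t v. P t v =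
     (\<Sum>a\<le>N. \<Sum>i\<le>d. \<Sum>j\<le>d-i. C a i j * t^a * c0 v^i * c1 v^j * c2 v^(d-i-j))"
    unfolding fampoly_alt by blast
  have "fampoly d (\<lambda>t v. \<Sum>a\<le>N. \<Sum>i\<le>d. \<Sum>j\<le>d-i.
      C a i j * t^a * L0 t v^i * L1 t v^j * L2 t v^(d-i-j))"
    apply (intro fampoly_sum finite_atMost)
    apply (rule fampoly_mult' fampoly_power' fampoly_const assms fampoly_t | simp)+
    done
  then show ?thesis
    by (rule fampoly_cong) (simp add: h[rule_format])
qed

lemma fampoly_homog:
  assumes "fampoly d P"
  shows "P t (smult3 s v) = s^d * P t v"
proof -
  from assms(1) obtain N C where h: "\<forall>t v. P t v =
     (\<Sum>a\<le>N. \<Sum>i\<le>d. \<Sum>j\<le>d-i. C a i j * t^a * c0 v^i * c1 v^j * c2 v^(d-i-j))"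
    unfolding fampoly_alt by blast
  have "P t (smult3 s v) = (\<Sum>a\<le>N. \<Sum>i\<le>d. \<Sum>j\<le>d-i. s^d * (C a i j * t^a * c0 v^i * c1 v^j * c2 v^(d-i-j)))"
    unfolding h[rule_format]
  proof (intro sum.cong refl)
    fix a i j assume "i \<in> {..d}" "j \<in> {..d-i}"
    then have "s^d = s^i * s^j * s^(d-i-j)" by (simp flip: power_add)
    then show "C a i j * t ^ a * c0 (smult3 s v) ^ i * c1 (smult3 s v) ^ j * c2 (smult3 s v) ^ (d - i - j) =
         s ^ d * (C a i j * t ^ a * c0 v ^ i * c1 v ^ j * c2 v ^ (d - i - j))"
      by (simp add: smult3_def power_mult_distrib)
  qed
  then show ?thesis by (simp add: h[rule_format] sum_distrib_left)
qed

lemma hompoly_fampoly: "hompoly d P \<Longrightarrow> fampoly d (\<lambda>t v. P v)"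
  unfolding hompoly_def fampoly_def by (rule exI[of _ 0]) auto

lemma fampoly_hompoly: "fampoly d P \<Longrightarrow> hompoly d (P t0)"
proof -
  assume "fampoly d P"
  then obtain N C where h: "\<forall>t v. P t v =
     (\<Sum>a\<le>N. \<Sum>i\<le>d. \<Sum>j\<le>d-i. C a i j * t^a * c0 v^i * c1 v^j * c2 v^(d-i-j))"
    unfolding fampoly_alt by blast
  show ?thesis unfolding hompoly_def
  proof (rule exI[of _ "\<lambda>i j. \<Sum>a\<le>N. C a i j * t0^a"], intro allI)
    fix x y z
    have "P t0 (x,y,z) = (\<Sum>a\<le>N. \<Sum>i\<le>d. \<Sum>j\<le>d-i. C a i j * t0^a * x^i * y^j * z^(d-i-j))"
      using h by simp
    also have "\<dots> = (\<Sum>i\<le>d. \<Sum>a\<le>N. \<Sum>j\<le>d-i. C a i j * t0^a * x^i * y^j * z^(d-i-j))"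
      by (rule sum.swap)
    also have "\<dots> = (\<Sum>i\<le>d. \<Sum>j\<le>d-i. \<Sum>a\<le>N. C a i j * t0^a * x^i * y^j * z^(d-i-j))"
      by (intro sum.cong refl sum.swap)
    also have "\<dots> = (\<Sum>i\<le>d. \<Sum>j\<le>d-i. (\<Sum>a\<le>N. C a i j * t0^a) * x^i * y^j * z^(d-i-j))"
      by (simp add: sum_distrib_right)
    finally show "P t0 (x,y,z) = (\<Sum>i\<le>d. \<Sum>j\<le>d-i. (\<Sum>a\<le>N. C a i j * t0^a) * x^i * y^j * z^(d-i-j))" .
  qed
qed

lemma hompoly_iff: "hompoly d P \<longleftrightarrow> fampoly d (\<lambda>t v. P v)"
  using hompoly_fampoly fampoly_hompoly[of d "\<lambda>t v. P v" 0] by auto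

lemma hompoly_homog: "hompoly d P \<Longrightarrow> P (smult3 s v) = s^d * P v"
  using fampoly_homog[of d "\<lambda>t v. P v"] by (simp add: hompoly_iff)

lemma hompoly1_explicit:
  assumes "hompoly 1 P"
  shows "P v = P (1,0,0) * c0 v + P (0,1,0) * c1 v + P (0,0,1) * c2 v"
proof -
  obtain C where h: "\<forall>x y z. P (x,y,z) = (\<Sum>i\<le>1. \<Sum>j\<le>1-i. C i j * x^i * y^j * z^(1-i-j))"
    using assms unfolding hompoly_def by blast
  have e: "P (x,y,z) = C 1 0 * x + C 0 1 * y + C 0 0 * z" for x y z
    using h[rule_format, of x y z] by (simp add: atMost_Suc)
  show ?thesis using e[of "c0 v" "c1 v" "c2 v"] e[of 1 0 0] e[of 0 1 0] e[of 0 0 1]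
    by (cases v) auto
qed

lemma hompoly0_explicit:
  assumes "hompoly 0 P"
  shows "P v = P (0,0,0)"
proof -
  obtain C where h: "\<forall>x y z. P (x,y,z) = (\<Sum>i\<le>0. \<Sum>j\<le>0-i. C i j * x^i * y^j * z^(0-i-j))"
    using assms unfolding hompoly_def by blast
  then show ?thesis by (cases v) auto
qed

lemma hompoly2_explicit:
  assumes "hompoly 2 P"
  shows "\<exists>a b c d e f. \<forall>x y z. P (x,y,z) = a*x^2 + b*y^2 + c*z^2 + d*x*y + e*x*z + f*y*z"
proof -
  obtain C where h: "\<forall>x y z. P (x,y,z) = (\<Sum>i\<le>2. \<Sum>j\<le>2-i. C i j * x^i * y^j * z^(2-i-j))"
    using assms unfolding hompoly_def by blast
  have "P (x,y,z) = C 2 0*x^2 + C 0 2*y^2 + C 0 0*z^2 + C 1 1*x*y + C 1 0*x*z + C 0 1*y*z" for x y z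
    using h[rule_format, of x y z] by (simp add: atMost_Suc numeral_2_eq_2 power2_eq_square algebra_simps)
  then show ?thesis by blast
qed


lemma smult3_simps[simp]: "c0 (smult3 s v) = s * c0 v" "c1 (smult3 s v) = s * c1 v" "c2 (smult3 s v) = s * c2 v"
  by (simp_all add: smult3_def c0_def c1_def c2_def)

lemma pt_eqI: "c0 v = c0 w \<Longrightarrow> c1 v = c1 w \<Longrightarrow> c2 v = c2 w \<Longrightarrow> v = w"
  by (cases v; cases w) (simp add: c0_def c1_def c2_def)

lemma nz_iff: "nz v \<longleftrightarrow> c0 v \<noteq> 0 \<or> c1 v \<noteq> 0 \<or> c2 v \<noteq> 0"
  by (cases v) (auto simp: nz_def)

lemma smult3_mult: "smult3 a (smult3 b v) = smult3 (a*b) (v::'k::comm_ring_1 pt)"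
  by (rule pt_eqI) (simp_all add: mult.assoc)

lemma smult3_one[simp]: "smult3 1 (v::'k::comm_ring_1 pt) = v"
  by (rule pt_eqI) simp_all

lemma nz_smult3: "nz (smult3 (s::'k::field) v) \<longleftrightarrow> s \<noteq> 0 \<and> nz v"
  by (auto simp: nz_iff)

lemma smult3_cancel: assumes "smult3 (a::'k::field) v = smult3 b v" "nz v" shows "a = b"
proof -
  have "a * c0 v = b * c0 v" "a * c1 v = b * c1 v" "a * c2 v = b * c2 v"
    using arg_cong[OF assms(1), of c0] arg_cong[OF assms(1), of c1] arg_cong[OF assms(1), of c2] by simp_all
  then show ?thesis using assms(2) by (auto simp: nz_iff)
qed

lemma fammap_homog: "fammap d F \<Longrightarrow> F t (smult3 s v) = smult3 (s^d) (F t v)"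
  unfolding fammap_def by (intro pt_eqI) (simp_all add: fampoly_homog[where P="\<lambda>t v. c0 (F t v)"]
      fampoly_homog[where P="\<lambda>t v. c1 (F t v)"] fampoly_homog[where P="\<lambda>t v. c2 (F t v)"])

lemma fammap_zero: "fammap d F \<Longrightarrow> 0 < d \<Longrightarrow> F t (0,0,0) = (0,0,0)"
proof -
  assume "fammap d F" "0 < d"
  have "F t (smult3 0 (0,0,0)) = smult3 (0^d) (F t (0,0,0))" by (rule fammap_homog[OF \<open>fammap d F\<close>])
  then show ?thesis using \<open>0 < d\<close> by (simp add: smult3_def c0_def c1_def c2_def power_0_left)
qed

lemma not_nz: "\<not> nz v \<longleftrightarrow> v = (0,0,0)" by (simp add: nz_def)

lemma par3_refl: "par3 v v" by (simp add: par3_def mult.commute)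

lemma fam_nontriv_I: "nz (F t v) \<Longrightarrow> fam_nontriv F" unfolding fam_nontriv_def by blast

lemma fammap_hommap: "fammap d F \<Longrightarrow> hommap d (F t)"
  unfolding fammap_def hommap_def using fampoly_hompoly by blast


lemma fam_equiv_refl: "fam_equiv F F"
  unfolding fam_equiv_def by (simp add: par3_refl)

lemma rat_val_I: "nz x \<Longrightarrow> fammap d F \<Longrightarrow> fam_nontriv F \<Longrightarrow> proj_eq (F t x) w \<Longrightarrow> rat_val F t x w"
  unfolding rat_val_def using fam_equiv_refl by blast

lemma proj_eq_I: "nz v \<Longrightarrow> c \<noteq> 0 \<Longrightarrow> w = smult3 c v \<Longrightarrow> proj_eq v w"
  unfolding proj_eq_def by blast

locale fam =
  fixes F G :: "'k::field \<Rightarrow> 'k pt \<Rightarrow> 'k pt" and \<Lambda> M :: "'k \<Rightarrow> 'k pt \<Rightarrow> 'k"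
  assumes F: "fammap 2 F" and G: "fammap 2 G" and L: "fampoly 3 \<Lambda>" and M: "fampoly 3 M"
    and GF: "\<And>t x. G t (F t x) = smult3 (\<Lambda> t x) x"
    and FG: "\<And>t w. F t (G t w) = smult3 (M t w) w"
    and ex: "\<And>t. \<exists>x. nz x \<and> \<Lambda> t x \<noteq> 0"
begin

lemma F_nz: assumes "nz x" "\<Lambda> t x \<noteq> 0" shows "nz (F t x)"
proof (rule ccontr)
  assume "\<not> nz (F t x)"
  then have "G t (F t x) = (0,0,0)" using fammap_zero[OF G] by (simp add: not_nz)
  then show False using GF[of t x] assms nz_smult3[of "\<Lambda> t x" x] by (simp add: nz_def)
qed

lemma M_F: assumes "nz x" "\<Lambda> t x \<noteq> 0" shows "M t (F t x) = (\<Lambda> t x)^2"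
proof -
  have "F t (G t (F t x)) = smult3 (M t (F t x)) (F t x)" by (rule FG)
  moreover have "F t (G t (F t x)) = smult3 ((\<Lambda> t x)^2) (F t x)" by (simp add: GF fammap_homog[OF F])
  ultimately show ?thesis using smult3_cancel F_nz[OF assms] by metis
qed

lemma G_nz: assumes "nz w" "M t w \<noteq> 0" shows "nz (G t w)"
proof (rule ccontr)
  assume "\<not> nz (G t w)"
  then have "F t (G t w) = (0,0,0)" using fammap_zero[OF F] by (simp add: not_nz)
  then show False using FG[of t w] assms nz_smult3[of "M t w" w] by (simp add: nz_def)
qed

lemma L_G: assumes "nz w" "M t w \<noteq> 0" shows "\<Lambda> t (G t w) = (M t w)^2"
proof -
  have "G t (F t (G t w)) = smult3 (\<Lambda> t (G t w)) (G t w)" by (rule GF)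
  moreover have "G t (F t (G t w)) = smult3 ((M t w)^2) (G t w)" by (simp add: FG fammap_homog[OF G])
  ultimately show ?thesis using smult3_cancel G_nz[OF assms] by metis
qed

lemma rat_val_F: assumes "nz x" "nz (F t x)" shows "rat_val F t x (F t x)"
  using rat_val_I[OF assms(1) F fam_nontriv_I[of F t x] proj_eq_I[OF assms(2), of 1]] assms by simp

lemma rat_val_G: assumes "nz w" "nz (G t w)" shows "rat_val G t w (G t w)"
  using rat_val_I[OF assms(1) G fam_nontriv_I[of G t w] proj_eq_I[OF assms(2), of 1]] assms by simp

lemma rat_val_F_gen: assumes "nz x" "nz (F t x)" "w = smult3 c (F t x)" "c \<noteq> 0" shows "rat_val F t x w"
  using rat_val_I[OF assms(1) F fam_nontriv_I[of F t x] proj_eq_I[OF assms(2) assms(4) assms(3)]] assms by blast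

lemma rat_val_G_gen: assumes "nz w" "nz (G t w)" "x = smult3 c (G t w)" "c \<noteq> 0" shows "rat_val G t w x"
  using rat_val_I[OF assms(1) G fam_nontriv_I[of G t w] proj_eq_I[OF assms(2) assms(4) assms(3)]] assms by blast

lemma GF_inv: assumes "nz x" "\<Lambda> t x \<noteq> 0" shows "x = smult3 (1 / \<Lambda> t x) (G t (F t x))"
  using assms by (simp add: GF smult3_mult)

lemma FG_inv: assumes "nz w" "M t w \<noteq> 0" shows "w = smult3 (1 / M t w) (F t (G t w))"
  using assms by (simp add: FG smult3_mult)

lemma demazure: "demazure_family F"
proof -
  define U where "U = {(t,x). nz x \<and> (\<exists>P\<in>{\<Lambda>}. P t x \<noteq> 0)}"
  define V where "V = {(t,x). nz x \<and> (\<exists>P\<in>{M}. P t x \<noteq> 0)}"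
  have zU: "zopen_fam U" unfolding zopen_fam_def U_def using L by blast
  have zV: "zopen_fam V" unfolding zopen_fam_def V_def using M by blast
  have U1: "(t, F t x) \<in> V \<and> rat_val F t x (F t x) \<and> rat_val G t (F t x) x" if "(t,x) \<in> U" for t x
  proof -
    have a: "nz x" "\<Lambda> t x \<noteq> 0" using that by (auto simp: U_def)
    have b: "nz (F t x)" by (rule F_nz[OF a])
    have c: "M t (F t x) \<noteq> 0" using M_F[OF a] a by simp
    show ?thesis using a b c rat_val_F[OF a(1) b] rat_val_G_gen[OF b _ GF_inv[OF a]] F_nz a
      by (auto simp: V_def GF nz_smult3)
  qed
  have V1: "(t, G t w) \<in> U \<and> rat_val G t w (G t w) \<and> rat_val F t (G t w) w" if "(t,w) \<in> V" for t w
  proof -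
    have a: "nz w" "M t w \<noteq> 0" using that by (auto simp: V_def)
    have b: "nz (G t w)" by (rule G_nz[OF a])
    have c: "\<Lambda> t (G t w) \<noteq> 0" using L_G[OF a] a by simp
    show ?thesis using a b c rat_val_G[OF a(1) b] rat_val_F_gen[OF b _ FG_inv[OF a]]
      by (auto simp: U_def FG nz_smult3)
  qed
  have sU: "fst ` U = UNIV"
  proof -
    have "t \<in> fst ` U" for t using ex[of t] by (force simp: U_def image_iff)
    then show ?thesis by auto
  qed
  have sV: "fst ` V = UNIV"
  proof -
    have "t \<in> fst ` V" for t
    proof -
      obtain x where "(t,x) \<in> U" using ex[of t] by (auto simp: U_def)
      then have "(t, F t x) \<in> V" using U1 by blast
      then show ?thesis by (metis fst_conv image_eqI)
    qed
    then show ?thesis by auto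
  qed
  obtain x0 where x0: "nz x0" "\<Lambda> 0 x0 \<noteq> 0" using ex by blast
  have ntF: "fam_nontriv F" using F_nz[OF x0] by (rule fam_nontriv_I)
  have ntG: "fam_nontriv G"
    using G_nz[of "F 0 x0" 0] F_nz[OF x0] M_F[OF x0] x0 by (auto intro: fam_nontriv_I)
  show ?thesis unfolding demazure_family_def
    apply (rule exI[of _ 2], rule exI[of _ 2], rule exI[of _ G], rule exI[of _ U], rule exI[of _ V])
    using F G ntF ntG zU zV sU sV U1 V1 by blast
qed

lemma birat: "birational_map (F t)"
proof -
  define W where "W = {x. nz x \<and> (\<exists>P\<in>{\<Lambda> t}. P x \<noteq> 0)}"
  define W' where "W' = {x. nz x \<and> (\<exists>P\<in>{M t}. P x \<noteq> 0)}"
  have zW: "zopen2 W" unfolding zopen2_def W_def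
    by (rule exI[of _ "{\<Lambda> t}"]) (use fampoly_hompoly[OF L] in auto)
  have zW': "zopen2 W'" unfolding zopen2_def W'_def
    by (rule exI[of _ "{M t}"]) (use fampoly_hompoly[OF M] in auto)
  obtain x0 where x0: "nz x0" "\<Lambda> t x0 \<noteq> 0" using ex by blast
  have nW: "W \<noteq> {}" using x0 unfolding W_def by blast
  have "F t x0 \<in> W'" using F_nz[OF x0] M_F[OF x0] x0 unfolding W'_def by simp
  then have nW': "W' \<noteq> {}" by blast
  have pW: "nz (F t x) \<and> nz (G t (F t x)) \<and> proj_eq x (G t (F t x))" if "x \<in> W" for x
  proof -
    have a: "nz x" "\<Lambda> t x \<noteq> 0" using that by (auto simp: W_def)
    show ?thesis using F_nz[OF a] proj_eq_I[OF a(1) a(2), of "G t (F t x)"] a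
      by (simp add: GF nz_smult3)
  qed
  have pW': "nz (G t x) \<and> nz (F t (G t x)) \<and> proj_eq x (F t (G t x))" if "x \<in> W'" for x
  proof -
    have a: "nz x" "M t x \<noteq> 0" using that by (auto simp: W'_def)
    show ?thesis using G_nz[OF a] proj_eq_I[OF a(1) a(2), of "F t (G t x)"] a
      by (simp add: FG nz_smult3)
  qed
  show ?thesis unfolding birational_map_def
    apply (rule exI[of _ 2], rule exI[of _ 2], rule exI[of _ "G t"], rule exI[of _ W], rule exI[of _ W'])
    apply (intro conjI)
    using fammap_hommap[OF F] fammap_hommap[OF G] zW zW' nW nW' pW pW' by blast+
qed

lemma fiber: "fiber_rep F t (F t)"
proof -
  define W where "W = {x. nz x \<and> (\<exists>P\<in>{\<Lambda> t}. P x \<noteq> 0)}"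
  have zW: "zopen2 W" unfolding zopen2_def W_def
    by (rule exI[of _ "{\<Lambda> t}"]) (use fampoly_hompoly[OF L] in auto)
  obtain x0 where x0: "nz x0" "\<Lambda> t x0 \<noteq> 0" using ex by blast
  have nW: "W \<noteq> {}" using x0 unfolding W_def by blast
  show ?thesis unfolding fiber_rep_def
    apply (rule exI[of _ 2], rule exI[of _ W])
    apply (intro conjI)
    using fammap_hommap[OF F] zW nW F_nz[OF x0] rat_val_F
       apply blast+
    using F_nz rat_val_F unfolding W_def by blast
qed

lemma fiber_id:
  assumes F0: "\<And>x. \<exists>l. F 0 x = smult3 l x"
  shows "fiber_rep F 0 (\<lambda>v. v)"
proof -
  define W where "W = {x. nz x \<and> (\<exists>P\<in>{\<Lambda> 0}. P x \<noteq> 0)}"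
  have zW: "zopen2 W" unfolding zopen2_def W_def
    by (rule exI[of _ "{\<Lambda> 0}"]) (use fampoly_hompoly[OF L] in auto)
  obtain x0 where x0: "nz x0" "\<Lambda> 0 x0 \<noteq> 0" using ex by blast
  have nW: "W \<noteq> {}" using x0 unfolding W_def by blast
  have hid: "hommap 1 (\<lambda>v::'k pt. v)"
    unfolding hommap_def hompoly_iff using fampoly_x fampoly_y fampoly_z by auto
  have rv: "rat_val F 0 x x" if "x \<in> W" for x
  proof -
    have a: "nz x" "\<Lambda> 0 x \<noteq> 0" using that by (auto simp: W_def)
    obtain l where l: "F 0 x = smult3 l x" using F0 by blast
    have "nz (F 0 x)" by (rule F_nz[OF a])
    then have "l \<noteq> 0" using l nz_smult3[of l x] by simp
    then have "x = smult3 (1/l) (F 0 x)" by (simp add: l smult3_mult)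
    then show ?thesis using rat_val_F_gen[OF a(1) \<open>nz (F 0 x)\<close>, of x "1/l"] \<open>l \<noteq> 0\<close> by simp
  qed
  show ?thesis unfolding fiber_rep_def
    apply (rule exI[of _ 1], rule exI[of _ W])
    apply (intro conjI)
    using hid zW nW rv x0 unfolding W_def by blast+
qed

end


definition colmap :: "'k::comm_ring pt \<Rightarrow> 'k pt \<Rightarrow> 'k pt \<Rightarrow> 'k pt \<Rightarrow> 'k pt" where
  "colmap a b c y = (c0 y * c0 a + c1 y * c0 b + c2 y * c0 c,
                     c0 y * c1 a + c1 y * c1 b + c2 y * c1 c,
                     c0 y * c2 a + c1 y * c2 b + c2 y * c2 c)"

definition adjmap :: "'k::comm_ring pt \<Rightarrow> 'k pt \<Rightarrow> 'k pt \<Rightarrow> 'k pt \<Rightarrow> 'k pt" where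
  "adjmap a b c x = (det3 x b c, det3 a x c, det3 a b x)"

lemma colmap_c[simp]:
  "c0 (colmap a b c y) = c0 y * c0 a + c1 y * c0 b + c2 y * c0 c"
  "c1 (colmap a b c y) = c0 y * c1 a + c1 y * c1 b + c2 y * c1 c"
  "c2 (colmap a b c y) = c0 y * c2 a + c1 y * c2 b + c2 y * c2 c"
  by (simp_all add: colmap_def)

lemma adjmap_c[simp]:
  "c0 (adjmap a b c x) = det3 x b c" "c1 (adjmap a b c x) = det3 a x c" "c2 (adjmap a b c x) = det3 a b x"
  by (simp_all add: adjmap_def)

lemma adj_col: "adjmap a b c (colmap a b c y) = smult3 (det3 a b c) (y::'k::comm_ring pt)"
  by (rule pt_eqI) (simp_all add: det3_def algebra_simps)

lemma col_adj: "colmap a b c (adjmap a b c x) = smult3 (det3 a b c) (x::'k::comm_ring pt)"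
  by (rule pt_eqI) (simp_all add: det3_def algebra_simps)

lemma col_smult: "colmap a b c (smult3 s y) = smult3 s (colmap a b c (y::'k::comm_ring pt))"
  by (rule pt_eqI) (simp_all add: algebra_simps)

lemma add3_c[simp]: "c0 (add3 v w) = c0 v + c0 w" "c1 (add3 v w) = c1 v + c1 w" "c2 (add3 v w) = c2 v + c2 w"
  by (simp_all add: add3_def c0_def c1_def c2_def)

lemma col_add: "colmap a b c (add3 y z) = add3 (colmap a b c y) (colmap a b c (z::'k::comm_ring pt))"
  by (rule pt_eqI) (simp_all add: algebra_simps)

lemma col_e: "colmap a b c (1,0,0) = (a::'k::comm_ring_1 pt)" "colmap a b c (0,1,0) = b" "colmap a b c (0,0,1) = c"
  by (rule pt_eqI; simp)+

lemma fampoly_lin: "fampoly 1 (\<lambda>t v. \<alpha> * c0 v + \<beta> * c1 v + \<gamma> * c2 v)"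
  by (rule fampoly_intros | simp)+

lemma fampoly_det1: "fampoly 1 (\<lambda>t v. det3 v b c)"
  by (rule fampoly_cong[OF fampoly_lin[of "c1 b * c2 c - c2 b * c1 c" "- (c0 b * c2 c - c2 b * c0 c)" "c0 b * c1 c - c1 b * c0 c"]])
     (simp add: det3_def algebra_simps)
lemma fampoly_det2: "fampoly 1 (\<lambda>t v. det3 a v c)"
  by (rule fampoly_cong[OF fampoly_lin[of "- (c1 a * c2 c - c2 a * c1 c)" "c0 a * c2 c - c2 a * c0 c" "- (c0 a * c1 c - c1 a * c0 c)"]])
     (simp add: det3_def algebra_simps)
lemma fampoly_det3: "fampoly 1 (\<lambda>t v. det3 a b v)"
  by (rule fampoly_cong[OF fampoly_lin[of "c1 a * c2 b - c2 a * c1 b" "- (c0 a * c2 b - c2 a * c0 b)" "c0 a * c1 b - c1 a * c0 b"]])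
     (simp add: det3_def algebra_simps)

lemma fampoly_adj: "fampoly d P \<Longrightarrow> fampoly d (\<lambda>t x. P t (adjmap a b c x))"
  using fampoly_subst[OF _ fampoly_det1 fampoly_det2 fampoly_det3, of d P] by (simp add: adjmap_def)

lemma fampoly_lin': "fampoly 1 (\<lambda>t v. c0 v * \<alpha> + c1 v * \<beta> + c2 v * \<gamma>)"
  by (rule fampoly_intros | simp)+

lemma fampoly_col: "fampoly d P \<Longrightarrow> fampoly d (\<lambda>t x. P t (colmap a b c x))"
  using fampoly_subst[OF _ fampoly_lin'[of "c0 a" "c0 b" "c0 c"] fampoly_lin'[of "c1 a" "c1 b" "c1 c"] fampoly_lin'[of "c2 a" "c2 b" "c2 c"], of d P]
  by (simp add: colmap_def)

lemma fammap_adj: "fammap d H \<Longrightarrow> fammap d (\<lambda>t x. H t (adjmap a b c x))"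
  unfolding fammap_def using fampoly_adj[of d "\<lambda>t v. c0 (H t v)" a b c] fampoly_adj[of d "\<lambda>t v. c1 (H t v)" a b c]
    fampoly_adj[of d "\<lambda>t v. c2 (H t v)" a b c] by simp

lemma fampoly_cmult_r: "fampoly d P \<Longrightarrow> fampoly d (\<lambda>t v. P t v * c)"
  using fampoly_cmult[of d P c] by (simp add: mult.commute)

lemma fampoly_lincomb: "fampoly d P \<Longrightarrow> fampoly d Q \<Longrightarrow> fampoly d R \<Longrightarrow>
   fampoly d (\<lambda>t v. P t v * \<alpha> + Q t v * \<beta> + R t v * \<gamma>)"
  by (intro fampoly_add fampoly_cmult_r)

lemma fampoly_cmult_r_dummy: True by simp

lemma fammap_col: "fammap d H \<Longrightarrow> fammap d (\<lambda>t x. colmap a b c (H t x))"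
  unfolding fammap_def by (simp add: fampoly_lincomb)

lemma hompoly_adj: "hompoly d P \<Longrightarrow> hompoly d (\<lambda>x. P (adjmap a b c x))"
  using fampoly_adj[of d "\<lambda>t v. P v" a b c] by (simp add: hompoly_iff)
lemma hompoly_col: "hompoly d P \<Longrightarrow> hompoly d (\<lambda>x. P (colmap a b c x))"
  using fampoly_col[of d "\<lambda>t v. P v" a b c] by (simp add: hompoly_iff)
lemma hommap_adj: "hommap d H \<Longrightarrow> hommap d (\<lambda>x. H (adjmap a b c x))"
  unfolding hommap_def using hompoly_adj[of d "\<lambda>v. c0 (H v)" a b c] hompoly_adj[of d "\<lambda>v. c1 (H v)" a b c]
    hompoly_adj[of d "\<lambda>v. c2 (H v)" a b c] by simp
lemma hommap_col: "hommap d H \<Longrightarrow> hommap d (\<lambda>x. H (colmap a b c x))"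
  unfolding hommap_def using hompoly_col[of d "\<lambda>v. c0 (H v)" a b c] hompoly_col[of d "\<lambda>v. c1 (H v)" a b c]
    hompoly_col[of d "\<lambda>v. c2 (H v)" a b c] by simp
lemma hommap_colout: "hommap d H \<Longrightarrow> hommap d (\<lambda>x. colmap a b c (H x))"
  using fammap_col[of d "\<lambda>t v. H v"] unfolding hommap_def fammap_def hompoly_iff by simp
lemma hommap_adjout: "hommap d H \<Longrightarrow> hommap d (\<lambda>x. adjmap a b c (H x))"
proof -
  assume "hommap d H"
  then have h: "fampoly d (\<lambda>t v. c0 (H v))" "fampoly d (\<lambda>t v. c1 (H v))" "fampoly d (\<lambda>t v. c2 (H v))"
    unfolding hommap_def hompoly_iff by auto
  have 1: "fampoly d (\<lambda>t v. det3 (H v) b c)"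
    by (rule fampoly_cong[OF fampoly_lincomb[OF h, of "c1 b * c2 c - c2 b * c1 c" "- (c0 b * c2 c - c2 b * c0 c)" "c0 b * c1 c - c1 b * c0 c"]])
     (simp add: det3_def algebra_simps)
  have 2: "fampoly d (\<lambda>t v. det3 a (H v) c)"
    by (rule fampoly_cong[OF fampoly_lincomb[OF h, of "- (c1 a * c2 c - c2 a * c1 c)" "c0 a * c2 c - c2 a * c0 c" "- (c0 a * c1 c - c1 a * c0 c)"]])
     (simp add: det3_def algebra_simps)
  have 3: "fampoly d (\<lambda>t v. det3 a b (H v))"
    by (rule fampoly_cong[OF fampoly_lincomb[OF h, of "c1 a * c2 b - c2 a * c1 b" "- (c0 a * c2 b - c2 a * c0 b)" "c0 a * c1 b - c1 a * c0 b"]])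
     (simp add: det3_def algebra_simps)
  show ?thesis using 1 2 3 unfolding hommap_def hompoly_iff by simp
qed

lemma hommap_smult: "hommap d H \<Longrightarrow> hommap d (\<lambda>x. smult3 s (H x))"
  unfolding hommap_def hompoly_iff by (auto intro: fampoly_cmult)

lemma hompoly_smult: "hompoly d P \<Longrightarrow> hompoly d (\<lambda>x. s * P x)"
  using fampoly_cmult[of d "\<lambda>t v. P v" s] by (simp add: hompoly_iff)

lemma hommap_homog: "hommap d H \<Longrightarrow> H (smult3 s v) = smult3 (s^d) (H v)"
  unfolding hommap_def by (intro pt_eqI) (auto simp: hompoly_homog[where P="\<lambda>v. c0 (H v)"]
    hompoly_homog[where P="\<lambda>v. c1 (H v)"] hompoly_homog[where P="\<lambda>v. c2 (H v)"])


lemma adj_smult: "adjmap a b c (smult3 s x) = smult3 s (adjmap a b c (x::'k::comm_ring pt))"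
  by (rule pt_eqI) (simp_all add: det3_def algebra_simps)

definition msec :: "('k pt \<Rightarrow> 'k pt) \<Rightarrow> 'k second_pt \<Rightarrow> 'k second_pt" where
  "msec f s = (case s of Proper w \<Rightarrow> Proper (f w) | Infnear v \<Rightarrow> Infnear (f v))"

definition net :: "('k::comm_ring_1 pt \<Rightarrow> 'k pt) \<Rightarrow> ('k pt \<Rightarrow> 'k) set" where
  "net H = {(\<lambda>v. a * c0 (H v) + b * c1 (H v) + c * c2 (H v)) | a b c. True}"

definition conics :: "'k::comm_ring_1 pt \<Rightarrow> 'k second_pt \<Rightarrow> 'k pt \<Rightarrow> ('k pt \<Rightarrow> 'k) set" where
  "conics p1 p2 p3 = {Q. hompoly 2 Q \<and> Q p1 = 0 \<and> second_cond p1 p2 Q \<and> Q p3 = 0}"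

lemma second_cond_scale: "second_cond p s R \<Longrightarrow> second_cond p s (\<lambda>v. k * R v)"
  by (cases s) (auto simp: second_cond_def algebra_simps)

lemma second_cond_col:
  "second_cond (colmap a b c (1,0,0)) (msec (colmap a b c) s) Q \<longleftrightarrow> second_cond (1,0,0) s (\<lambda>y. Q (colmap a b c y))"
  by (cases s) (simp_all add: second_cond_def msec_def col_add)

locale coords =
  fixes a b c :: "'k::field pt"
  assumes D: "det3 a b c \<noteq> 0"
begin

abbreviation "D \<equiv> det3 a b c"
abbreviation "Pm \<equiv> colmap a b c"
abbreviation "Am \<equiv> adjmap a b c"

lemma ncf_transport:
  assumes h: "hommap 2 h" and n: "no_common_factor 2 h"
  shows "no_common_factor 2 (\<lambda>x. Pm (h (Am x)))"
  unfolding no_common_factor_def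
proof
  assume "\<exists>cc L M. 0 < cc \<and> cc \<le> 2 \<and> hompoly cc L \<and> (\<exists>v. L v \<noteq> 0) \<and> hommap (2 - cc) M
        \<and> (\<forall>v. Pm (h (Am v)) = smult3 (L v) (M v))"
  then obtain cc L M v0 where cc: "0 < cc" "cc \<le> 2" and L: "hompoly cc L" and v0: "L v0 \<noteq> 0"
    and M: "hommap (2 - cc) M" and eq: "\<And>v. Pm (h (Am v)) = smult3 (L v) (M v)" by blast
  define L' where "L' y = L (Pm y)" for y
  define M' where "M' y = smult3 (1 / D^3) (Am (M (Pm y)))" for y
  have L': "hompoly cc L'" unfolding L'_def by (rule hompoly_col[OF L])
  have "L' (Am v0) = D^cc * L v0" unfolding L'_def by (simp add: col_adj hompoly_homog[OF L])
  then have L'0: "L' (Am v0) \<noteq> 0" using D v0 by simp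
  have M': "hommap (2 - cc) M'" unfolding M'_def
    by (intro hommap_smult hommap_adjout hommap_col M)
  have "h y = smult3 (L' y) (M' y)" for y
  proof -
    have "Pm (h (Am (Pm y))) = smult3 (L (Pm y)) (M (Pm y))" by (rule eq)
    then have "smult3 (D^2) (Pm (h y)) = smult3 (L (Pm y)) (M (Pm y))"
      by (simp add: adj_col hommap_homog[OF h] col_smult)
    then have "Am (smult3 (D^2) (Pm (h y))) = Am (smult3 (L (Pm y)) (M (Pm y)))" by simp
    then have "smult3 (D^3) (h y) = smult3 (L (Pm y)) (Am (M (Pm y)))"
      by (simp add: adj_smult adj_col smult3_mult power3_eq_cube power2_eq_square mult.assoc)
    then have "smult3 (1/D^3) (smult3 (D^3) (h y)) = smult3 (1/D^3) (smult3 (L (Pm y)) (Am (M (Pm y))))" by simp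
    then show ?thesis using D by (simp add: smult3_mult L'_def M'_def mult.commute)
  qed
  then show False using n cc L' L'0 M' unfolding no_common_factor_def by blast
qed

lemma net_transport:
  assumes h: "hommap 2 h" and nh: "net h = conics (1,0,0) s q"
  shows "net (\<lambda>x. Pm (h (Am x))) = conics a (msec Pm s) (Pm q)"
proof
  let ?H = "\<lambda>x. Pm (h (Am x))"
  have H: "hommap 2 ?H" by (intro hommap_colout hommap_adj h)
  have HP: "?H (Pm y) = smult3 (D^2) (Pm (h y))" for y
    by (simp add: adj_col hommap_homog[OF h] col_smult)
  have hAP: "h (Am (Pm y)) = smult3 (D^2) (h y)" for y
    unfolding adj_col by (rule hommap_homog[OF h])
  have a: "a = Pm (1,0,0)" by (simp add: col_e)
  show "net ?H \<subseteq> conics a (msec Pm s) (Pm q)"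
  proof
    fix Q assume "Q \<in> net ?H"
    then obtain \<alpha> \<beta> \<gamma> where Q: "Q = (\<lambda>v. \<alpha> * c0 (?H v) + \<beta> * c1 (?H v) + \<gamma> * c2 (?H v))"
      unfolding net_def by blast
    define R where "R = (\<lambda>y. (\<alpha> * c0 a + \<beta> * c1 a + \<gamma> * c2 a) * c0 (h y) + (\<alpha> * c0 b + \<beta> * c1 b + \<gamma> * c2 b) * c1 (h y)
         + (\<alpha> * c0 c + \<beta> * c1 c + \<gamma> * c2 c) * c2 (h y))"
    have "R \<in> net h" unfolding R_def net_def by blast
    then have R: "R \<in> conics (1,0,0) s q" using nh by simp
    have QP: "(\<lambda>y. Q (Pm y)) = (\<lambda>y. D^2 * R y)"
      by (rule ext) (simp add: Q hAP R_def algebra_simps)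
    have hQ: "hompoly 2 Q"
      using H unfolding Q hommap_def hompoly_iff by (intro fampoly_add fampoly_cmult) auto
    have "Q a = 0" using fun_cong[OF QP, of "(1,0,0)"] R a by (simp add: conics_def)
    moreover have "Q (Pm q) = 0" using fun_cong[OF QP, of q] R by (simp add: conics_def)
    moreover have "second_cond a (msec Pm s) Q"
      using a second_cond_col[of a b c s Q] QP second_cond_scale[of "(1,0,0)" s R "D^2"] R
      by (simp add: conics_def)
    ultimately show "Q \<in> conics a (msec Pm s) (Pm q)" using hQ by (simp add: conics_def)
  qed
  show "conics a (msec Pm s) (Pm q) \<subseteq> net ?H"
  proof
    fix Q assume "Q \<in> conics a (msec Pm s) (Pm q)"
    then have hQ: "hompoly 2 Q" and Qa: "Q a = 0" and Qs: "second_cond a (msec Pm s) Q" and Qq: "Q (Pm q) = 0"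
      by (auto simp: conics_def)
    have "(\<lambda>y. Q (Pm y)) \<in> conics (1,0,0) s q"
      using hompoly_col[OF hQ] Qa Qq Qs second_cond_col[of a b c s Q] a by (simp add: conics_def)
    then have "(\<lambda>y. Q (Pm y)) \<in> net h" using nh by simp
    then obtain \<alpha> \<beta> \<gamma> where Q'': "(\<lambda>y. Q (Pm y)) = (\<lambda>y. \<alpha> * c0 (h y) + \<beta> * c1 (h y) + \<gamma> * c2 (h y))"
      unfolding net_def by blast
    have Q': "Q (Pm y) = \<alpha> * c0 (h y) + \<beta> * c1 (h y) + \<gamma> * c2 (h y)" for y
      using fun_cong[OF Q'', of y] by simp
    define e' where "e' i = \<alpha> * c0 (Am i) + \<beta> * c1 (Am i) + \<gamma> * c2 (Am i)" for i
    define e where "e i = e' i / D^3" for i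
    have key: "e' (1,0,0) * c0 (Pm z) + e' (0,1,0) * c1 (Pm z) + e' (0,0,1) * c2 (Pm z)
        = \<alpha> * c0 (Am (Pm z)) + \<beta> * c1 (Am (Pm z)) + \<gamma> * c2 (Am (Pm z))" for z
      unfolding e'_def adjmap_c
    proof -
      fix w :: "'k pt"
      have l1: "det3 (Pm z) b c = c0 (Pm z) * det3 (1,0,0) b c + c1 (Pm z) * det3 (0,1,0) b c + c2 (Pm z) * det3 (0,0,1) b c"
        by (simp only: det3_def c012_simps) (simp add: algebra_simps)
      have l2: "det3 a (Pm z) c = c0 (Pm z) * det3 a (1,0,0) c + c1 (Pm z) * det3 a (0,1,0) c + c2 (Pm z) * det3 a (0,0,1) c"
        by (simp only: det3_def c012_simps) (simp add: algebra_simps)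
      have l3: "det3 a b (Pm z) = c0 (Pm z) * det3 a b (1,0,0) + c1 (Pm z) * det3 a b (0,1,0) + c2 (Pm z) * det3 a b (0,0,1)"
        by (simp only: det3_def c012_simps) (simp add: algebra_simps)
      show "(\<alpha> * det3 (1, 0, 0) b c + \<beta> * det3 a (1, 0, 0) c + \<gamma> * det3 a b (1, 0, 0)) * c0 (Pm z) +
          (\<alpha> * det3 (0, 1, 0) b c + \<beta> * det3 a (0, 1, 0) c + \<gamma> * det3 a b (0, 1, 0)) * c1 (Pm z) +
          (\<alpha> * det3 (0, 0, 1) b c + \<beta> * det3 a (0, 0, 1) c + \<gamma> * det3 a b (0, 0, 1)) * c2 (Pm z) =
          \<alpha> * det3 (Pm z) b c + \<beta> * det3 a (Pm z) c + \<gamma> * det3 a b (Pm z)"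
        unfolding l1 l2 l3 by (simp only: algebra_simps)
    qed
    have key2: "e (1,0,0) * c0 (Pm z) + e (0,1,0) * c1 (Pm z) + e (0,0,1) * c2 (Pm z)
        = (\<alpha> * c0 z + \<beta> * c1 z + \<gamma> * c2 z) / D^2" for z
    proof -
      have "e (1,0,0) * c0 (Pm z) + e (0,1,0) * c1 (Pm z) + e (0,0,1) * c2 (Pm z)
          = (e' (1,0,0) * c0 (Pm z) + e' (0,1,0) * c1 (Pm z) + e' (0,0,1) * c2 (Pm z)) / D^3"
        unfolding e_def by (simp add: add_divide_distrib)
      also have "\<dots> = (\<alpha> * c0 (Am (Pm z)) + \<beta> * c1 (Am (Pm z)) + \<gamma> * c2 (Am (Pm z))) / D^3"
        by (simp only: key)
      also have "\<dots> = (D * (\<alpha> * c0 z + \<beta> * c1 z + \<gamma> * c2 z)) / (D * D^2)"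
        by (simp only: adj_col smult3_simps) (simp add: algebra_simps power3_eq_cube power2_eq_square)
      also have "\<dots> = (\<alpha> * c0 z + \<beta> * c1 z + \<gamma> * c2 z) / D^2"
        using D by simp
      finally show ?thesis .
    qed
    have "Q x = e (1,0,0) * c0 (?H x) + e (0,1,0) * c1 (?H x) + e (0,0,1) * c2 (?H x)" for x
    proof -
      have "D^2 * Q x = Q (Pm (Am x))" by (simp add: col_adj hompoly_homog[OF hQ])
      also have "\<dots> = \<alpha> * c0 (h (Am x)) + \<beta> * c1 (h (Am x)) + \<gamma> * c2 (h (Am x))" by (rule Q')
      finally have 1: "D^2 * Q x = \<alpha> * c0 (h (Am x)) + \<beta> * c1 (h (Am x)) + \<gamma> * c2 (h (Am x))" .
      have 2: "e (1,0,0) * c0 (?H x) + e (0,1,0) * c1 (?H x) + e (0,0,1) * c2 (?H x)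
         = (\<alpha> * c0 (h (Am x)) + \<beta> * c1 (h (Am x)) + \<gamma> * c2 (h (Am x))) / D^2"
        by (rule key2)
      have 3: "Q x = (\<alpha> * c0 (h (Am x)) + \<beta> * c1 (h (Am x)) + \<gamma> * c2 (h (Am x))) / D^2"
        using 1 D by (simp add: eq_divide_eq mult.commute)
      show ?thesis using 2 3 by simp
    qed
    then have "Q = (\<lambda>v. e (1,0,0) * c0 (?H v) + e (0,1,0) * c1 (?H v) + e (0,0,1) * c2 (?H v))" by (rule ext)
    then show "Q \<in> net ?H" unfolding net_def by blast
  qed
qed

end


definition hP :: "'k::field \<Rightarrow> 'k pt \<Rightarrow> 'k pt" where
  "hP t v = (c0 v * (c2 v - t * c1 v), c1 v * (c2 v - t * c0 v), c2 v * c2 v - t * t * c0 v * c1 v)"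
definition gP :: "'k::field \<Rightarrow> 'k pt \<Rightarrow> 'k pt" where
  "gP t v = (c0 v * (c2 v - t * c0 v), c1 v * (c2 v - t * c1 v), (c2 v - t * c0 v) * (c2 v - t * c1 v))"
definition lP :: "'k::field \<Rightarrow> 'k pt \<Rightarrow> 'k" where
  "lP t v = c2 v * (c2 v - t * c0 v) * (c2 v - t * c1 v)"
definition mP :: "'k::field \<Rightarrow> 'k pt \<Rightarrow> 'k" where
  "mP t v = (c2 v - t * c0 v) * (c2 v - t * c1 v) * (c2 v - t * c0 v - t * c1 v)"

definition hI :: "'k::field \<Rightarrow> 'k pt \<Rightarrow> 'k pt" where
  "hI t v = (c0 v * c2 v, c1 v * (c2 v - t * c1 v), (c2 v - t * c1 v) * (c2 v + t * c1 v))"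
definition gI :: "'k::field \<Rightarrow> 'k pt \<Rightarrow> 'k pt" where
  "gI t v = (c0 v * (c2 v - 2 * t * c1 v), c1 v * (c2 v - t * c1 v), (c2 v - t * c1 v) * (c2 v - t * c1 v))"
definition lI :: "'k::field \<Rightarrow> 'k pt \<Rightarrow> 'k" where
  "lI t v = c2 v * (c2 v - t * c1 v) * (c2 v - t * c1 v)"
definition mI :: "'k::field \<Rightarrow> 'k pt \<Rightarrow> 'k" where
  "mI t v = (c2 v - t * c1 v) * (c2 v - t * c1 v) * (c2 v - 2 * t * c1 v)"

lemma fampoly_cmult': "fampoly d P \<Longrightarrow> fampoly d (\<lambda>t v. k * P t v)"
  by (rule fampoly_cmult)

lemmas fpi = fampoly_intros fampoly_cmult'

lemma fam_P: "fammap 2 hP" "fammap 2 gP" "fampoly 3 lP" "fampoly 3 mP"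
  unfolding fammap_def hP_def gP_def lP_def mP_def c012_simps
  by (rule conjI | rule fpi | simp)+

lemma fam_I: "fammap 2 hI" "fammap 2 gI" "fampoly 3 lI" "fampoly 3 mI"
  unfolding fammap_def hI_def gI_def lI_def mI_def c012_simps
  by (rule conjI | rule fpi | simp)+

lemma inv_P: "gP t (hP t x) = smult3 (lP t x) x" "hP t (gP t x) = smult3 (mP t x) x"
  by (rule pt_eqI; simp add: hP_def gP_def lP_def mP_def algebra_simps)+

lemma inv_I: "gI t (hI t x) = smult3 (lI t x) x" "hI t (gI t x) = smult3 (mI t x) x"
  by (rule pt_eqI; simp add: hI_def gI_def lI_def mI_def algebra_simps)+

lemma l_e3: "lP t (0,0,1) = 1" "lI t (0,0,1) = 1"
  by (simp_all add: lP_def lI_def)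

lemma h0: "hP 0 y = smult3 (c2 y) y" "hI 0 y = smult3 (c2 y) y"
  by (rule pt_eqI; simp add: hP_def hI_def mult.commute)+

lemma net_P: "net (hP t) = conics (1,0,0) (Proper (0,1,0)) (1,1,t)"
proof
  show "net (hP t) \<subseteq> conics (1,0,0) (Proper (0,1,0)) (1,1,t)"
  proof
    fix Q assume "Q \<in> net (hP t)"
    then obtain \<alpha> \<beta> \<gamma> where Q: "Q = (\<lambda>v. \<alpha> * c0 (hP t v) + \<beta> * c1 (hP t v) + \<gamma> * c2 (hP t v))"
      unfolding net_def by blast
    have "hompoly 2 Q" unfolding Q hompoly_iff hP_def c012_simps
      by (rule fpi | simp)+
    then show "Q \<in> conics (1,0,0) (Proper (0,1,0)) (1,1,t)"
      unfolding conics_def second_cond_def by (simp add: Q hP_def)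
  qed
  show "conics (1,0,0) (Proper (0,1,0)) (1,1,t) \<subseteq> net (hP t)"
  proof
    fix Q assume "Q \<in> conics (1,0,0) (Proper (0,1,0)) (1,1,t)"
    then have h: "hompoly 2 Q" "Q (1,0,0) = 0" "Q (0,1,0) = 0" "Q (1,1,t) = 0"
      by (auto simp: conics_def second_cond_def)
    obtain A B C D E F where Q: "\<And>x y z. Q (x,y,z) = A*x^2 + B*y^2 + C*z^2 + D*x*y + E*x*z + F*y*z"
      using hompoly2_explicit[OF h(1)] by blast
    have "A = 0" "B = 0" using h(2-3) by (simp_all add: Q)
    have s: "D + (E * t + (F * t + C * t^2)) = 0" using h(2-4) by (simp add: Q algebra_simps)
    have Deq: "D = - (E * t + (F * t + C * t^2))" by (subst eq_neg_iff_add_eq_0) (rule s)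
    have "Q = (\<lambda>v. E * c0 (hP t v) + F * c1 (hP t v) + C * c2 (hP t v))"
      by (intro ext) (simp add: Q hP_def Deq \<open>A = 0\<close> \<open>B = 0\<close> split_paired_all algebra_simps power2_eq_square)
    then show "Q \<in> net (hP t)" unfolding net_def by blast
  qed
qed

lemma net_I: "net (hI t) = conics (1,0,0) (Infnear (0,1,0)) (0,1,t)"
proof
  show "net (hI t) \<subseteq> conics (1,0,0) (Infnear (0,1,0)) (0,1,t)"
  proof
    fix Q assume "Q \<in> net (hI t)"
    then obtain \<alpha> \<beta> \<gamma> where Q: "Q = (\<lambda>v. \<alpha> * c0 (hI t v) + \<beta> * c1 (hI t v) + \<gamma> * c2 (hI t v))"
      unfolding net_def by blast
    have "hompoly 2 Q" unfolding Q hompoly_iff hI_def c012_simps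
      by (rule fpi | simp)+
    then show "Q \<in> conics (1,0,0) (Infnear (0,1,0)) (0,1,t)"
      unfolding conics_def second_cond_def by (simp add: Q hI_def add3_def algebra_simps)
  qed
  show "conics (1,0,0) (Infnear (0,1,0)) (0,1,t) \<subseteq> net (hI t)"
  proof
    fix Q assume "Q \<in> conics (1,0,0) (Infnear (0,1,0)) (0,1,t)"
    then have h: "hompoly 2 Q" "Q (1,0,0) = 0" "Q (1,1,0) - Q (1,0,0) - Q (0,1,0) = 0" "Q (0,1,t) = 0"
      by (auto simp: conics_def second_cond_def add3_def)
    obtain A B C D E F where Q: "\<And>x y z. Q (x,y,z) = A*x^2 + B*y^2 + C*z^2 + D*x*y + E*x*z + F*y*z"
      using hompoly2_explicit[OF h(1)] by blast
    have "A = 0" "D = 0" using h(2-3) by (simp_all add: Q)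
    have s: "B + (F * t + C * t^2) = 0" using h(2-4) by (simp add: Q algebra_simps)
    have Beq: "B = - (F * t + C * t^2)" by (subst eq_neg_iff_add_eq_0) (rule s)
    have "Q = (\<lambda>v. E * c0 (hI t v) + F * c1 (hI t v) + C * c2 (hI t v))"
      by (intro ext) (simp add: Q hI_def Beq \<open>A = 0\<close> \<open>D = 0\<close> split_paired_all algebra_simps power2_eq_square)
    then show "Q \<in> net (hI t)" unfolding net_def by blast
  qed
qed


lemma ncf_generic:
  fixes h :: "'k::field pt \<Rightarrow> 'k pt"
  assumes two: "\<And>m L. (\<And>v. h v = smult3 (L v) m) \<Longrightarrow> False"
    and one: "\<And>a b c p1 p2 p3 q1 q2 q3 r1 r2 r3. (\<And>x y z. h (x,y,z) =
         smult3 (a*x + b*y + c*z) (p1*x + p2*y + p3*z, q1*x + q2*y + q3*z, r1*x + r2*y + r3*z)) \<Longrightarrow> False"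
  shows "no_common_factor 2 h"
  unfolding no_common_factor_def
proof
  assume "\<exists>cc L M. 0 < cc \<and> cc \<le> 2 \<and> hompoly cc L \<and> (\<exists>v. L v \<noteq> 0) \<and> hommap (2 - cc) M
        \<and> (\<forall>v. h v = smult3 (L v) (M v))"
  then obtain cc L M where cc: "0 < cc" "cc \<le> 2" and L: "hompoly cc L"
    and M: "hommap (2 - cc) M" and eq: "\<And>v. h v = smult3 (L v) (M v)" by blast
  have "cc = 1 \<or> cc = 2" using cc by auto
  then show False
  proof
    assume "cc = 2"
    then have M0: "hompoly 0 (\<lambda>v. c0 (M v))" "hompoly 0 (\<lambda>v. c1 (M v))" "hompoly 0 (\<lambda>v. c2 (M v))"
      using M by (auto simp: hommap_def)
    have "M v = M (0,0,0)" for v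
      using hompoly0_explicit[OF M0(1), of v] hompoly0_explicit[OF M0(2), of v] hompoly0_explicit[OF M0(3), of v]
      by (intro pt_eqI) auto
    then show False using two[of L "M (0,0,0)"] eq by metis
  next
    assume "cc = 1"
    then have M1: "hompoly 1 (\<lambda>v. c0 (M v))" "hompoly 1 (\<lambda>v. c1 (M v))" "hompoly 1 (\<lambda>v. c2 (M v))"
      and L1: "hompoly 1 L"
      using M L by (auto simp: hommap_def)
    show False
    proof (rule one)
      fix x y z
      show "h (x,y,z) = smult3 (L (1,0,0)*x + L (0,1,0)*y + L (0,0,1)*z)
         (c0 (M (1,0,0))*x + c0 (M (0,1,0))*y + c0 (M (0,0,1))*z,
          c1 (M (1,0,0))*x + c1 (M (0,1,0))*y + c1 (M (0,0,1))*z,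
          c2 (M (1,0,0))*x + c2 (M (0,1,0))*y + c2 (M (0,0,1))*z)"
        unfolding eq
        using hompoly1_explicit[OF L1, of "(x,y,z)"] hompoly1_explicit[OF M1(1), of "(x,y,z)"]
          hompoly1_explicit[OF M1(2), of "(x,y,z)"] hompoly1_explicit[OF M1(3), of "(x,y,z)"]
        by (intro pt_eqI) (simp_all add: mult.commute)
    qed
  qed
qed

lemma ncf_P: assumes t: "t \<noteq> 0" shows "no_common_factor 2 (hP t)"
proof (rule ncf_generic)
  fix m :: "'a pt" and L assume eq: "\<And>v. hP t v = smult3 (L v) m"
  have e3: "(0,0,1) = smult3 (L (0,0,1)) m" using eq[of "(0,0,1)"] by (simp add: hP_def)
  have "L (0,0,1) * c2 m = 1" "L (0,0,1) * c0 m = 0"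
    using arg_cong[OF e3, of c2] arg_cong[OF e3, of c0] by simp_all
  then have "c0 m = 0" by auto
  moreover have "1 = L (1,0,1) * c0 m" using arg_cong[OF eq[of "(1,0,1)"], of c0] by (simp add: hP_def)
  ultimately show False by simp
next
  fix a b c p1 p2 p3 q1 q2 q3 r1 r2 r3 :: 'a
  assume eq: "\<And>x y z. hP t (x,y,z) =
         smult3 (a*x + b*y + c*z) (p1*x + p2*y + p3*z, q1*x + q2*y + q3*z, r1*x + r2*y + r3*z)"
  note E = eq[THEN arg_cong, of c0] eq[THEN arg_cong, of c1] eq[THEN arg_cong, of c2]
  have e1: "c * r3 = 1" "c * p3 = 0" "c * q3 = 0" using E[of 0 0 1] by (simp_all add: hP_def)
  have e2: "1 = (a + c) * (p1 + p3)" using E(1)[of 1 0 1] by (simp add: hP_def)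
  have e3: "a * p1 = 0" "b * q2 = 0" using E(1)[of 1 0 0] E(2)[of 0 1 0] by (simp_all add: hP_def)
  have e4: "1 = (b + c) * (q2 + q3)" using E(2)[of 0 1 1] by (simp add: hP_def)
  have e6: "- t = (a + b) * (p1 + p2)" using E(1)[of 1 1 0] by (simp add: hP_def)
  have "c \<noteq> 0" using e1 by auto
  then have "p3 = 0" "q3 = 0" using e1 by auto
  then have "(a + c) * p1 = 1" "(b + c) * q2 = 1" using e2 e4 by simp_all
  then have "p1 \<noteq> 0" "q2 \<noteq> 0" by auto
  then have "a = 0" "b = 0" using e3 by auto
  then show False using e6 t by simp
qed

lemma ncf_I: assumes t: "t \<noteq> 0" shows "no_common_factor 2 (hI t)"
proof (rule ncf_generic)
  fix m :: "'a pt" and L assume eq: "\<And>v. hI t v = smult3 (L v) m"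
  have e3: "(0,0,1) = smult3 (L (0,0,1)) m" using eq[of "(0,0,1)"] by (simp add: hI_def)
  have "L (0,0,1) * c2 m = 1" "L (0,0,1) * c0 m = 0"
    using arg_cong[OF e3, of c2] arg_cong[OF e3, of c0] by simp_all
  then have "c0 m = 0" by auto
  moreover have "1 = L (1,0,1) * c0 m" using arg_cong[OF eq[of "(1,0,1)"], of c0] by (simp add: hI_def)
  ultimately show False by simp
next
  fix a b c p1 p2 p3 q1 q2 q3 r1 r2 r3 :: 'a
  assume eq: "\<And>x y z. hI t (x,y,z) =
         smult3 (a*x + b*y + c*z) (p1*x + p2*y + p3*z, q1*x + q2*y + q3*z, r1*x + r2*y + r3*z)"
  note E = eq[THEN arg_cong, of c0] eq[THEN arg_cong, of c1] eq[THEN arg_cong, of c2]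
  have e1: "c * r3 = 1" "c * p3 = 0" using E[of 0 0 1] by (simp_all add: hI_def)
  have e2: "1 = (a + c) * (p1 + p3)" using E(1)[of 1 0 1] by (simp add: hI_def)
  have e3: "a * p1 = 0" "b * p2 = 0" using E(1)[of 1 0 0] E(1)[of 0 1 0] by (simp_all add: hI_def)
  have e4: "- t = b * q2" using E(2)[of 0 1 0] by (simp add: hI_def)
  have e5: "0 = (a + b) * (p1 + p2)" using E(1)[of 1 1 0] by (simp add: hI_def)
  have "c \<noteq> 0" using e1 by auto
  then have "p3 = 0" using e1 by auto
  then have "(a + c) * p1 = 1" using e2 by simp
  then have "p1 \<noteq> 0" by auto
  then have "a = 0" using e3 by auto
  have "b \<noteq> 0" using e4 t by auto
  then have "p2 = 0" using e3 by auto
  then show False using e5 \<open>a = 0\<close> \<open>b \<noteq> 0\<close> \<open>p1 \<noteq> 0\<close> by simp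
qed


lemma nz_zero_homog: "fampoly d P \<Longrightarrow> 0 < d \<Longrightarrow> P t x \<noteq> 0 \<Longrightarrow> nz x"
proof (rule ccontr)
  assume "fampoly d P" "0 < d" "P t x \<noteq> 0" "\<not> nz x"
  then have "x = smult3 0 x" by (simp add: not_nz smult3_def)
  then have "P t x = 0^d * P t x" using fampoly_homog[OF \<open>fampoly d P\<close>, of t 0 x] by simp
  then show False using \<open>0 < d\<close> \<open>P t x \<noteq> 0\<close> by (simp add: power_0_left)
qed

context coords
begin

lemma nz_Pm: "nz y \<Longrightarrow> nz (Pm y)"
proof (rule ccontr)
  assume "nz y" "\<not> nz (Pm y)"
  then have "Am (Pm y) = (0,0,0)" by (simp add: not_nz adjmap_def det3_def)
  then have "smult3 D y = (0,0,0)" by (simp add: adj_col)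
  then show False using \<open>nz y\<close> D nz_smult3[of D y] by (simp add: nz_def)
qed

lemma assemble:
  fixes h g :: "'k \<Rightarrow> 'k pt \<Rightarrow> 'k pt" and l m :: "'k \<Rightarrow> 'k pt \<Rightarrow> 'k" and q :: "'k \<Rightarrow> 'k pt"
  assumes fh: "fammap 2 h" and fg: "fammap 2 g" and fl: "fampoly 3 l" and fm: "fampoly 3 m"
    and gh: "\<And>t x. g t (h t x) = smult3 (l t x) x" and hg: "\<And>t x. h t (g t x) = smult3 (m t x) x"
    and le3: "\<And>t. l t (0,0,1) = 1" and h0: "\<And>y. h 0 y = smult3 (c2 y) y"
    and ncf: "\<And>t. t \<noteq> 0 \<Longrightarrow> no_common_factor 2 (h t)"
    and nt: "\<And>t. t \<noteq> 0 \<Longrightarrow> net (h t) = conics (1,0,0) s (q t)"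
  shows "demazure_family (\<lambda>t x. Pm (h t (Am x)))
     \<and> (\<forall>t. t \<noteq> 0 \<longrightarrow> (\<exists>H. fiber_rep (\<lambda>t x. Pm (h t (Am x))) t H \<and> quad_map_bp H a (msec Pm s) (Pm (q t))))
     \<and> fiber_rep (\<lambda>t x. Pm (h t (Am x))) 0 (\<lambda>v. v)"
proof -
  define F where "F = (\<lambda>t x. Pm (h t (Am x)))"
  define G where "G = (\<lambda>t x. Pm (g t (Am x)))"
  define \<Lambda> where "\<Lambda> = (\<lambda>t x. D^3 * l t (Am x))"
  define M where "M = (\<lambda>t x. D^3 * m t (Am x))"
  have FF: "fammap 2 F" unfolding F_def by (intro fammap_col fammap_adj fh)
  have GG: "fammap 2 G" unfolding G_def by (intro fammap_col fammap_adj fg)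
  have LL: "fampoly 3 \<Lambda>" unfolding \<Lambda>_def by (intro fampoly_cmult fampoly_adj fl)
  have MM: "fampoly 3 M" unfolding M_def by (intro fampoly_cmult fampoly_adj fm)
  have GF: "G t (F t x) = smult3 (\<Lambda> t x) x" for t x
    by (simp add: F_def G_def \<Lambda>_def adj_col fammap_homog[OF fg] gh col_smult col_adj smult3_mult
        power3_eq_cube power2_eq_square mult_ac)
  have FG: "F t (G t x) = smult3 (M t x) x" for t x
    by (simp add: F_def G_def M_def adj_col fammap_homog[OF fh] hg col_smult col_adj smult3_mult
        power3_eq_cube power2_eq_square mult_ac)
  have ex: "\<exists>x. nz x \<and> \<Lambda> t x \<noteq> 0" for t
  proof -
    have "\<Lambda> t (Pm (0,0,1)) = D^3 * D^3" unfolding \<Lambda>_def adj_col fampoly_homog[OF fl] le3 by simp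
    then have "\<Lambda> t (Pm (0,0,1)) \<noteq> 0" using D by simp
    moreover have "nz (Pm (0,0,1))" by (rule nz_zero_homog[OF LL _ \<open>\<Lambda> t (Pm (0,0,1)) \<noteq> 0\<close>]) simp
    ultimately show ?thesis by blast
  qed
  interpret fam F G \<Lambda> M
    by unfold_locales (use FF GG LL MM GF FG ex in auto)
  have part3: "fiber_rep F 0 (\<lambda>v. v)"
  proof (rule fiber_id)
    fix x
    have "F 0 x = smult3 (c2 (Am x) * D) x" by (simp add: F_def h0 col_smult col_adj smult3_mult)
    then show "\<exists>l. F 0 x = smult3 l x" by blast
  qed
  have part2: "\<exists>H. fiber_rep F t H \<and> quad_map_bp H a (msec Pm s) (Pm (q t))" if "t \<noteq> 0" for t
  proof (intro exI conjI)
    show "fiber_rep F t (F t)" by (rule fiber)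
    have ht: "hommap 2 (h t)" by (rule fammap_hommap[OF fh])
    have "net (F t) = conics a (msec Pm s) (Pm (q t))"
      unfolding F_def by (rule net_transport[OF ht nt[OF that]])
    moreover have "no_common_factor 2 (F t)"
      unfolding F_def by (rule ncf_transport[OF ht ncf[OF that]])
    ultimately show "quad_map_bp (F t) a (msec Pm s) (Pm (q t))"
      unfolding quad_map_bp_def using fammap_hommap[OF FF] birat
      by (simp add: net_def conics_def)
  qed
  show ?thesis using demazure part2 part3 unfolding F_def by blast
qed

end

lemma exists_u: assumes "\<not> par3 (p1::'k::field pt) w" shows "\<exists>u. det3 p1 w u \<noteq> 0"
proof (rule ccontr)
  assume "\<not> ?thesis"
  then have "det3 p1 w (1,0,0) = 0" "det3 p1 w (0,1,0) = 0" "det3 p1 w (0,0,1) = 0" by auto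
  then show False using assms by (simp add: det3_def par3_def algebra_simps)
qed

theorem lemma4p1:
  fixes p1 :: "'k::field_char_0 pt" and p2 :: "'k second_pt"
  assumes "alg_closed TYPE('k)"
    and "nz p1"
    and "valid_second p1 p2"
  shows "\<exists>F p3. demazure_family F \<and> morph_A1_P2 p3
     \<and> (\<forall>t. t \<noteq> 0 \<longrightarrow> (\<exists>H. fiber_rep F t H \<and> quad_map_bp H p1 p2 (p3 t)))
     \<and> fiber_rep F 0 (\<lambda>v. v)
     \<and> det3 p1 (second_vec p2) (p3 0) = 0"
proof -
  define w where "w = second_vec p2"
  have np: "\<not> par3 p1 w" using assms(3) by (cases p2) (auto simp: valid_second_def w_def second_vec_def)
  obtain u where u: "det3 p1 w u \<noteq> 0" using exists_u[OF np] by blast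
  interpret coords p1 w u by unfold_locales (rule u)
  have a1: "Pm (1,0,0) = p1" "Pm (0,1,0) = w" by (simp_all add: col_e)
  have morph: "morph_A1_P2 (\<lambda>t. Pm (x0, 1, t))" for x0
  proof -
    have "Pm (x0,1,t) = (poly [: x0 * c0 p1 + c0 w, c0 u :] t, poly [: x0 * c1 p1 + c1 w, c1 u :] t,
         poly [: x0 * c2 p1 + c2 w, c2 u :] t) \<and> nz (Pm (x0,1,t))" for t
      by (intro conjI pt_eqI nz_Pm) (simp_all add: algebra_simps nz_def)
    then show ?thesis unfolding morph_A1_P2_def by blast
  qed
  show ?thesis
  proof (cases p2)
    case (Proper w')
    then have p2: "p2 = Proper w" by (simp add: w_def second_vec_def)
    have "msec Pm (Proper (0,1,0)) = p2" using p2 a1 by (simp add: msec_def)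
    then have A: "demazure_family (\<lambda>t x. Pm (hP t (Am x)))
     \<and> (\<forall>t. t \<noteq> 0 \<longrightarrow> (\<exists>H. fiber_rep (\<lambda>t x. Pm (hP t (Am x))) t H \<and> quad_map_bp H p1 p2 (Pm (1,1,t))))
     \<and> fiber_rep (\<lambda>t x. Pm (hP t (Am x))) 0 (\<lambda>v. v)"
      using assemble[where q="\<lambda>t. (1,1,t)" and s="Proper (0,1,0)", OF fam_P inv_P l_e3(1) h0(1) ncf_P net_P] by simp
    have "det3 p1 (second_vec p2) (Pm (1,1,0)) = 0" using p2
      by (simp add: second_vec_def det3_def algebra_simps)
    then show ?thesis using A morph[of 1] by blast
  next
    case (Infnear w')
    then have p2: "p2 = Infnear w" by (simp add: w_def second_vec_def)
    have "msec Pm (Infnear (0,1,0)) = p2" using p2 a1 by (simp add: msec_def)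
    then have A: "demazure_family (\<lambda>t x. Pm (hI t (Am x)))
     \<and> (\<forall>t. t \<noteq> 0 \<longrightarrow> (\<exists>H. fiber_rep (\<lambda>t x. Pm (hI t (Am x))) t H \<and> quad_map_bp H p1 p2 (Pm (0,1,t))))
     \<and> fiber_rep (\<lambda>t x. Pm (hI t (Am x))) 0 (\<lambda>v. v)"
      using assemble[where q="\<lambda>t. (0,1,t)" and s="Infnear (0,1,0)", OF fam_I inv_I l_e3(2) h0(2) ncf_I net_I] by simp
    have "det3 p1 (second_vec p2) (Pm (0,1,0)) = 0" using p2
      by (simp add: second_vec_def det3_def algebra_simps)
    then show ?thesis using A morph[of 0] by blast
  qed
qed

end
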